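(* Let $A\in\mathbb R^{n\times n}$ be symmetric with $A\not\succeq0$ and $b\in\mathbb R^n$. Then the trust region subproblem \[ ({\rm TRS})\quad \min_{x\in\mathbb R^n}\ x^TAx+2b^Tx\quad\text{s.t.}\quad \|x\|^2\le1 \] is equivalent to (in particular has the same optimal value as) the ball-constrained convex quadratic program \[ \min_{x\in\mathbb R^n}\ x^T(A-\lambda_{\min}(A)I_n)x+2b^Tx+\lambda_{\min}(A)\quad\text{s.t.}\quad \|x\|^2\le1. \]
   Context: $\lambda_{\min}(A)$ is the smallest eigenvalue of $A$; $I_n$ is the $n\times n$ identity; $\|\cdot\|$ is the Euclidean norm. *)

theory Defs
  imports "HOL-Analysis.Analysis"
begin

definition psd :: "real^'n^'n \<Rightarrow> bool" where
  "psd A \<longleftrightarrow> (\<forall>x. 0 \<le> x \<bullet> (A *v x))"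

definition lambda_min :: "real^'n^'n \<Rightarrow> real" where
  "lambda_min A = Min {c. \<exists>v. v \<noteq> 0 \<and> A *v v = c *\<^sub>R v}"

end

theory Submission
  imports Defs
begin

lemma smv: "((c::real) *\<^sub>R M) *v (x::real^'n) = c *\<^sub>R (M *v x)"
  by (simp add: vec_eq_iff matrix_vector_mult_def sum_distrib_left mult.assoc)

lemma symdot: assumes "transpose A = A" shows "(A *v x) \<bullet> y = x \<bullet> (A *v (y::real^'n))"
  by (metis assms dot_lmul_matrix vector_transpose_matrix)

lemma quad: "x \<bullet> ((A - c *\<^sub>R mat 1) *v x) = x \<bullet> (A *v x) - c * norm x ^ 2" for x :: "real^'n"
  by (simp add: matrix_vector_mult_diff_rdistrib smv inner_diff_right power2_norm_eq_inner)

lemma psd_zero_kernel: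
  fixes B :: "real^'n^'n"
  assumes sym: "transpose B = B" and ps: "\<And>y. 0 \<le> y \<bullet> (B *v y)" and u: "u \<bullet> (B *v u) = 0"
  shows "B *v u = 0"
proof -
  let ?w = "B *v u"
  have "\<forall>t::real. 0 \<le> 2 * t * (?w \<bullet> ?w) + t^2 * (?w \<bullet> (B *v ?w))"
  proof
    fix t :: real
    have "0 \<le> (u + t *\<^sub>R ?w) \<bullet> (B *v (u + t *\<^sub>R ?w))" by (rule ps)
    also have "\<dots> = u \<bullet> (B *v u) + t * (?w \<bullet> (B *v u)) + t * (u \<bullet> (B *v ?w)) + t^2 * (?w \<bullet> (B *v ?w))"
      by (simp add: matrix_vector_right_distrib matrix_vector_mult_scaleR inner_add_left inner_add_right power2_eq_square algebra_simps)
    also have "u \<bullet> (B *v ?w) = ?w \<bullet> ?w" using symdot[OF sym, of u ?w] by simp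
    finally show "0 \<le> 2 * t * (?w \<bullet> ?w) + t^2 * (?w \<bullet> (B *v ?w))"
      using u by (simp add: inner_commute)
  qed
  hence "?w \<bullet> ?w \<le> 0"
  proof -
    assume H: "\<forall>t::real. 0 \<le> 2 * t * (?w \<bullet> ?w) + t^2 * (?w \<bullet> (B *v ?w))"
    show ?thesis
    proof (rule ccontr)
      assume a: "\<not> ?w \<bullet> ?w \<le> 0"
      define p where "p = ?w \<bullet> ?w"
      define q where "q = ?w \<bullet> (B *v ?w)"
      have p: "p > 0" using a p_def by (simp add: not_le)
      have q: "q \<ge> 0" using ps q_def by simp
      define t where "t = - p / (q + 1)"
      have "0 \<le> 2 * t * p + t^2 * q" using H p_def q_def by simp
      moreover have "2 * t * p + t^2 * q < 0"
      proof -
        have "t^2 * q = p * p * q / ((q+1)*(q+1))" using q by (simp add: t_def power2_eq_square)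
        also have "\<dots> \<le> p * p / (q+1)"
          using p q by (simp add: divide_simps)
        finally have "t^2 * q \<le> p*p/(q+1)" .
        moreover have "2 * t * p = -2 * (p*p/(q+1))" by (simp add: t_def)
        moreover have "p*p/(q+1) > 0" using p q by simp
        ultimately show ?thesis by linarith
      qed
      ultimately show False by linarith
    qed
  qed
  thus ?thesis by (metis inner_ge_zero inner_eq_zero_iff order_antisym)
qed

lemma exists_neg_eig:
  fixes A :: "real^'n^'n"
  assumes sym: "transpose A = A" and np: "\<not> psd A"
  shows "\<exists>v m. v \<noteq> 0 \<and> A *v v = m *\<^sub>R v \<and> m < 0"
proof -
  let ?S = "sphere (0::real^'n) 1"
  have "?S \<noteq> {}" by (simp add: sphere_def) (metis norm_Basis SOME_Basis)
  moreover have "continuous_on ?S (\<lambda>x. x \<bullet> (A *v x))"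
    by (intro continuous_intros linear_continuous_on matrix_vector_mul_linear_gen bounded_linear_inner_right)
       (simp add: matrix_vector_mul_bounded_linear)
  ultimately obtain u where uS: "u \<in> ?S" and umin: "\<And>y. y \<in> ?S \<Longrightarrow> u \<bullet> (A *v u) \<le> y \<bullet> (A *v y)"
    using continuous_attains_inf[OF compact_sphere] by blast
  define m where "m = u \<bullet> (A *v u)"
  have nu: "norm u = 1" using uS by simp
  have ge: "m * norm y ^ 2 \<le> y \<bullet> (A *v y)" for y
  proof (cases "y = 0")
    case True thus ?thesis by simp
  next
    case False
    let ?z = "(1 / norm y) *\<^sub>R y"
    have "?z \<in> ?S" using False by simp
    hence "m \<le> ?z \<bullet> (A *v ?z)" using umin m_def by blast
    also have "\<dots> = (y \<bullet> (A *v y)) / norm y ^ 2"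
      by (simp add: matrix_vector_mult_scaleR power2_eq_square)
    finally show ?thesis using False by (simp add: divide_simps)
  qed
  let ?B = "A - m *\<^sub>R mat 1"
  have symB: "transpose ?B = ?B"
    using sym by (simp add: transpose_def vec_eq_iff mat_def)
  have psB: "0 \<le> y \<bullet> (?B *v y)" for y using ge[of y] by (simp add: quad)
  have zB: "u \<bullet> (?B *v u) = 0" using nu by (simp add: quad m_def)
  have "?B *v u = 0" by (rule psd_zero_kernel[OF symB psB zB])
  hence ev: "A *v u = m *\<^sub>R u"
    by (simp add: matrix_vector_mult_diff_rdistrib smv)
  obtain x where x: "x \<bullet> (A *v x) < 0" using np unfolding psd_def by (auto simp: not_le)
  have "m * norm x ^ 2 < 0" using ge[of x] x by linarith
  hence "m < 0" by (simp add: mult_less_0_iff)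
  moreover have "u \<noteq> 0" using nu by auto
  ultimately show ?thesis using ev by blast
qed

lemma eig_finite:
  fixes A :: "real^'n^'n"
  assumes sym: "transpose A = A"
  shows "finite {c. \<exists>v. v \<noteq> 0 \<and> A *v v = c *\<^sub>R v}"
proof -
  let ?E = "{c. \<exists>v. v \<noteq> 0 \<and> A *v v = c *\<^sub>R v}"
  define V where "V c = (SOME v. v \<noteq> 0 \<and> A *v v = c *\<^sub>R v)" for c
  have V: "c \<in> ?E \<Longrightarrow> V c \<noteq> 0 \<and> A *v V c = c *\<^sub>R V c" for c
    unfolding V_def by (rule someI_ex) simp
  have orth: "V c \<bullet> V d = 0" if "c \<in> ?E" "d \<in> ?E" "c \<noteq> d" for c d
  proof -
    have "(A *v V c) \<bullet> V d = V c \<bullet> (A *v V d)" by (rule symdot[OF sym])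
    hence "c * (V c \<bullet> V d) = d * (V c \<bullet> V d)" using V[OF that(1)] V[OF that(2)] by simp
    thus ?thesis using that(3) by simp
  qed
  have inj: "inj_on V ?E"
  proof (rule inj_onI)
    fix c d assume c: "c \<in> ?E" and d: "d \<in> ?E" and e: "V c = V d"
    show "c = d"
    proof (rule ccontr)
      assume "c \<noteq> d"
      hence "V c \<bullet> V c = 0" using orth[OF c d] e by simp
      thus False using V[OF c] by simp
    qed
  qed
  have "pairwise orthogonal (V ` ?E)"
    unfolding pairwise_def orthogonal_def using orth by fastforce
  moreover have "0 \<notin> V ` ?E" using V by fastforce
  ultimately have "independent (V ` ?E)" by (rule pairwise_orthogonal_independent)
  hence "finite (V ` ?E)" by (rule independent_imp_finite)
  thus ?thesis using inj finite_imageD by blast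
qed

theorem corollary1:
  fixes A :: "real^'n^'n" and b :: "real^'n"
  assumes "transpose A = A" and "\<not> psd A"
  shows "(INF x\<in>{x. norm x ^ 2 \<le> 1}. x \<bullet> (A *v x) + 2 * (b \<bullet> x))
       = (INF x\<in>{x. norm x ^ 2 \<le> 1}.
            x \<bullet> ((A - lambda_min A *\<^sub>R mat 1) *v x) + 2 * (b \<bullet> x) + lambda_min A)"
proof -
  note sym = assms(1)
  let ?E = "{c. \<exists>v. v \<noteq> 0 \<and> A *v v = c *\<^sub>R v}"
  define l where "l = lambda_min A"
  obtain v0 m where vm: "v0 \<noteq> 0" "A *v v0 = m *\<^sub>R v0" "m < 0" using exists_neg_eig[OF assms] by blast
  have fin: "finite ?E" by (rule eig_finite[OF sym])
  have mE: "m \<in> ?E" using vm by blast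
  hence ne: "?E \<noteq> {}" by blast
  have "l \<in> ?E" unfolding l_def lambda_min_def using Min_in[OF fin ne] .
  then obtain v1 where v1: "v1 \<noteq> 0" "A *v v1 = l *\<^sub>R v1" by blast
  have "l \<le> m" unfolding l_def lambda_min_def using Min_le[OF fin mE] .
  hence lneg: "l < 0" using vm by simp
  define v where "v = (1 / norm v1) *\<^sub>R v1"
  have nv: "norm v = 1" using v1 by (simp add: v_def)
  have Av: "A *v v = l *\<^sub>R v" using v1 by (simp add: v_def matrix_vector_mult_scaleR)
  define f where "f x = x \<bullet> (A *v x) + 2 * (b \<bullet> x)" for x :: "real^'n"
  define g where "g x = x \<bullet> ((A - l *\<^sub>R mat 1) *v x) + 2 * (b \<bullet> x) + l" for x :: "real^'n"
  have gq: "g x = f x - l * norm x ^ 2 + l" for x by (simp add: g_def f_def quad)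
  define K where "K = {x::real^'n. norm x ^ 2 \<le> 1}"
  have K: "K = cball 0 1" unfolding K_def cball_def
    by (auto simp: power_le_one_iff abs_square_le_1 norm_ge_zero)
  have Kne: "K \<noteq> {}" unfolding K by simp
  have contf: "continuous_on K f" unfolding f_def
    by (intro continuous_intros linear_continuous_on matrix_vector_mul_bounded_linear)
  have contg: "continuous_on K g" unfolding gq[abs_def]
    using contf by (intro continuous_intros)
  have bf: "bdd_below (f ` K)"
    by (rule bounded_imp_bdd_below, rule compact_imp_bounded, rule compact_continuous_image[OF contf])
       (simp add: K)
  have bg: "bdd_below (g ` K)"
    by (rule bounded_imp_bdd_below, rule compact_imp_bounded, rule compact_continuous_image[OF contg])
       (simp add: K)
  have le1: "(INF x\<in>K. g x) \<le> (INF x\<in>K. f x)"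
  proof (rule cINF_mono[OF Kne bg])
    fix x assume "x \<in> K"
    hence "norm x ^ 2 \<le> 1" by (simp add: K_def)
    hence "g x \<le> f x" using lneg gq[of x] by (simp add: mult_le_cancel_left_neg)
    thus "\<exists>n\<in>K. g n \<le> f x" using \<open>x \<in> K\<close> by blast
  qed
  have le2: "(INF x\<in>K. f x) \<le> (INF x\<in>K. g x)"
  proof (rule cINF_mono[OF Kne bf])
    fix x assume "x \<in> K"
    hence nx: "norm x ^ 2 \<le> 1" by (simp add: K_def)
    define s :: real where "s = (if b \<bullet> v \<le> 0 then 1 else -1)"
    define w where "w = s *\<^sub>R v"
    have s2: "s * s = 1" by (simp add: s_def)
    have nw: "w \<bullet> w = 1" using nv s2 by (simp add: w_def power2_norm_eq_inner[symmetric] power2_eq_square)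
    have Aw: "A *v w = l *\<^sub>R w" using Av by (simp add: w_def matrix_vector_mult_scaleR)
    have bw: "b \<bullet> w \<le> 0" by (simp add: w_def s_def)
    define a where "a = x \<bullet> w"
    define t where "t = - a + sqrt (a^2 + 1 - norm x ^ 2)"
    have disc: "a^2 + 1 - norm x ^ 2 \<ge> a^2" using nx by simp
    have t0: "t \<ge> 0"
    proof -
      have "sqrt (a^2) \<le> sqrt (a^2 + 1 - norm x ^ 2)" using disc by (rule real_sqrt_le_mono)
      thus ?thesis by (simp add: t_def)
    qed
    have tq: "t^2 + 2 * t * a + norm x ^ 2 = 1"
    proof -
      have "(t + a)^2 = a^2 + 1 - norm x ^ 2" unfolding t_def using disc
        by (simp add: real_sqrt_pow2 order_trans[OF zero_le_power2])
           (smt (verit) zero_le_power2)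
      thus ?thesis by (simp add: power2_eq_square algebra_simps)
    qed
    define y where "y = x + t *\<^sub>R w"
    have nxx: "norm x ^ 2 = x \<bullet> x" by (simp add: power2_norm_eq_inner)
    have "y \<bullet> y = x \<bullet> x + 2 * t * a + t^2 * (w \<bullet> w)"
      unfolding y_def a_def by (simp add: inner_add_left inner_add_right inner_commute power2_eq_square algebra_simps)
    hence ny: "norm y ^ 2 = 1" using tq nw nxx by (simp add: power2_norm_eq_inner)
    hence yK: "y \<in> K" by (simp add: K_def)
    have wAx: "w \<bullet> (A *v x) = l * a"
      using symdot[OF sym, of w x] Aw by (simp add: a_def inner_commute)
    have fy: "f y = f x + 2 * t * l * a + t^2 * l + 2 * t * (b \<bullet> w)"
      unfolding f_def y_def using wAx Aw nw
      by (simp add: matrix_vector_right_distrib matrix_vector_mult_scaleR inner_add_left inner_add_right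
          a_def inner_commute power2_eq_square algebra_simps)
    have "f y = g x + 2 * t * (b \<bullet> w)"
    proof -
      have "l * (2 * t * a + t^2) = l * (1 - norm x ^ 2)" using tq by simp
      thus ?thesis using fy gq[of x] by (simp add: algebra_simps)
    qed
    also have "\<dots> \<le> g x" using t0 bw by (simp add: mult_nonneg_nonpos)
    finally show "\<exists>n\<in>K. f n \<le> g x" using yK by blast
  qed
  show ?thesis using le1 le2 unfolding K_def[symmetric] f_def[symmetric] g_def[symmetric] l_def[symmetric]
    by linarith
qed

end
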